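(* Let $0=t_0<t_1<\dots<t_K$, $J_i=(t_{i-1},t_i]$, $\tau_i=t_i-t_{i-1}$, $X_i=C(J_i;\ell^1_\omega)$ with $\|a\|_{X_i}=\sup_{t\in J_i}\|a(t)\|_\omega$, $\gamma\in[0,1)$, $\hat\tau_i=\tau_i^{1-\gamma}/(1-\gamma)$. For each $i$ let $U_{J_i}(t,s)$, $t_{i-1}\le s\le t\le t_i$, be a family of bounded linear operators (the evolution operator of $\dot b=\mathcal Lb+\mathcal QD\mathcal N(\bar a^{J_i}(t))b$) and suppose there are positive constants with, for all $\phi,\psi\in\ell^1_\omega$: $\|U_{J_i}(t,s)\phi\|_\omega\le W^{S}_i\|\phi\|_\omega$ and $(t-s)^\gamma\|U_{J_i}(t,s)\mathcal Q\psi\|_\omega\le W^{S}_{q,i}\|\psi\|_\omega$ for $t_{i-1}\le s<t\le t_i$; $\|U_{J_i}(t_i,s)\phi\|_\omega\le W^{(t_i,J_i)}\|\phi\|_\omega$ and $(t_i-s)^\gamma\|U_{J_i}(t_i,s)\mathcal Q\psi\|_\omega\le W^{(t_i,J_i)}_q\|\psi\|_\omega$ for $s\in[t_{i-1},t_i)$; $\|U_{J_i}(t_i,t_{i-1})\phi\|_\omega\le W^{(t_i,t_{i-1})}\|\phi\|_\omega$. For $0\le j\le i$ set $W^{(t_i,t_j)}=W^{(t_i,t_{i-1})}\cdots W^{(t_{j+1},t_j)}$ (with $W^{(t_i,t_i)}=1$). Let $\mathbf W_\ell,\mathbf W_X,\mathbf W_Y$ be the matrix infinity norms (maximum absolute row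 sums) of the lower triangular $K\times K$ matrices with entries, for $1\le j\le i\le K$: $(M_\ell)_{ij}=W^S_iW^{(t_{i-1},t_{j-1})}$; $(M_X)_{ii}=\hat\tau_iW^S_{q,i}$ and $(M_X)_{ij}=\hat\tau_jW^S_iW^{(t_{i-1},t_j)}W_q^{(t_j,J_j)}$ for $j<i$; $(M_Y)_{ii}=\tau_iW^S_i$ and $(M_Y)_{ij}=\tau_jW^S_iW^{(t_{i-1},t_j)}W^{(t_j,J_j)}$ for $j<i$. Given $\phi^{J_i}\in\ell^1_\omega$ and $\psi^{J_i},p^{J_i}\in X_i$ ($i=1,\dots,K$), define recursively, with $h^{J_0}(t_0):=0$, $h^{J_i}(t)=U_{J_i}(t,t_{i-1})\big(\phi^{J_i}+h^{J_{i-1}}(t_{i-1})\big)+\int_{t_{i-1}}^tU_{J_i}(t,s)\big(\mathcal Q\psi^{J_i}(s)+p^{J_i}(s)\big)ds$, $t\in J_i$. Then $\max_i\|h^{J_i}\|_{X_i}\le\mathbf W_\ell\max_i\|\phi^{J_i}\|_\omega+\mathbf W_X\max_i\|\psi^{J_i}\|_{X_i}+\mathbf W_Y\max_i\|p^{J_i}\|_{X_i}$.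
   Context: Standing setting. Fix $d\ge1$ and $L_1,\dots,L_d>0$. Multi-indices are $\mathbf k=(k_1,\dots,k_d)\in\mathbb Z_{\ge0}^d$. Let $\alpha_{\mathbf k}=2^{\delta_{k_1,0}}\cdots2^{\delta_{k_d,0}}$, fix $\nu_F\ge1$, and set $\omega_{\mathbf k}=\alpha_{\mathbf k}\nu_F^{k_1+\cdots+k_d}$. $\ell^1_\omega$ is the Banach space of real sequences $a=(a_{\mathbf k})_{\mathbf k\ge0}$ with $\|a\|_\omega=\sum_{\mathbf k\ge0}|a_{\mathbf k}|\omega_{\mathbf k}<\infty$. Let $(\mathbf{kL})=((k_1L_1)^2+\cdots+(k_dL_d)^2)^{1/2}$. For given real $\lambda_0,\lambda_1,\lambda_2$ let $\mu_{\mathbf k}=\lambda_0-\lambda_1(\mathbf{kL})^2+\lambda_2(\mathbf{kL})^4$ and let $\mathcal L$ be the diagonal operator $(\mathcal L\phi)_{\mathbf k}=\mu_{\mathbf k}\phi_{\mathbf k}$. Fix $q\in\{0,2\}$ and let $(\mathcal Q\phi)_{\mathbf k}=\mathrm i^q(\mathbf{kL})^q\phi_{\mathbf k}$. $\mathcal N:\ell^1_\omega\to\ell^1_\omega$ is Fréchet differentiable with $\mathcal N(0)=0$, $D\mathcal N(0)=0$. For each $i$, $\bar a^{J_i}\in X_i$ is a given approximate solution on $J_i$. The evolution operators satisfy $U_{J_i}(s,s)=I$ and $U_{J_i}(t,r)U_{J_i}(r,s)=U_{J_i}(t,s)$. *)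

theory Defs
  imports "HOL-Analysis.Analysis"
begin

text \<open>Real sequences indexed by multi-indices k in Z_{>=0}^d; the dimension d is
  the cardinality of the finite index type 'd.\<close>
type_synonym 'd seq = "('d \<Rightarrow> nat) \<Rightarrow> real"

definition alpha :: "('d::finite \<Rightarrow> nat) \<Rightarrow> real" where
  "alpha k = (\<Prod>m\<in>UNIV. (2::real) ^ (if k m = 0 then 1 else 0))"

definition omega :: "real \<Rightarrow> ('d::finite \<Rightarrow> nat) \<Rightarrow> real" where
  "omega \<nu>F k = alpha k * \<nu>F ^ (\<Sum>m\<in>UNIV. k m)"

definition wnorm :: "real \<Rightarrow> 'd::finite seq \<Rightarrow> ennreal" where
  "wnorm \<nu>F a = (\<Sum>\<^sub>\<infinity>k. ennreal (\<bar>a k\<bar> * omega \<nu>F k))"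

definition in_l1w :: "real \<Rightarrow> 'd::finite seq \<Rightarrow> bool" where
  "in_l1w \<nu>F a \<longleftrightarrow> wnorm \<nu>F a < \<infinity>"

definition kLnorm :: "('d::finite \<Rightarrow> real) \<Rightarrow> ('d \<Rightarrow> nat) \<Rightarrow> real" where
  "kLnorm L k = sqrt (\<Sum>m\<in>UNIV. (real (k m) * L m)^2)"

text \<open>(Q phi)_k = i^q (kL)^q phi_k; for q in {0,2} this is real.\<close>
definition Qop :: "nat \<Rightarrow> ('d::finite \<Rightarrow> real) \<Rightarrow> 'd seq \<Rightarrow> 'd seq" where
  "Qop q L \<phi> = (\<lambda>k. Re (\<i> ^ q) * kLnorm L k ^ q * \<phi> k)"

definition Jint :: "(nat \<Rightarrow> real) \<Rightarrow> nat \<Rightarrow> real set" where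
  "Jint tg i = {tg (i - 1)<..tg i}"

definition tau :: "(nat \<Rightarrow> real) \<Rightarrow> nat \<Rightarrow> real" where
  "tau tg i = tg i - tg (i - 1)"

definition tauhat :: "(nat \<Rightarrow> real) \<Rightarrow> real \<Rightarrow> nat \<Rightarrow> real" where
  "tauhat tg \<gamma> i = tau tg i powr (1 - \<gamma>) / (1 - \<gamma>)"

definition in_C :: "real \<Rightarrow> real set \<Rightarrow> (real \<Rightarrow> 'd::finite seq) \<Rightarrow> bool" where
  "in_C \<nu>F J f \<longleftrightarrow> (\<forall>s\<in>J. in_l1w \<nu>F (f s)) \<and>
     (\<forall>s\<in>J. \<forall>\<epsilon>>0. \<exists>\<delta>>0. \<forall>s'\<in>J. \<bar>s' - s\<bar> < \<delta> \<longrightarrow>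
        wnorm \<nu>F (\<lambda>k. f s' k - f s k) < ennreal \<epsilon>)"

definition Xnorm :: "real \<Rightarrow> real set \<Rightarrow> (real \<Rightarrow> 'd::finite seq) \<Rightarrow> ennreal" where
  "Xnorm \<nu>F J f = (SUP s\<in>J. wnorm \<nu>F (f s))"

definition Wprod :: "(nat \<Rightarrow> real) \<Rightarrow> nat \<Rightarrow> nat \<Rightarrow> real" where
  "Wprod Wstep i j = (\<Prod>m\<in>{j<..i}. Wstep m)"

definition infnorm :: "nat \<Rightarrow> (nat \<Rightarrow> nat \<Rightarrow> real) \<Rightarrow> real" where
  "infnorm K M = Max ((\<lambda>i. \<Sum>j\<in>{1..K}. \<bar>M i j\<bar>) ` {1..K})"

definition Ml :: "(nat \<Rightarrow> real) \<Rightarrow> (nat \<Rightarrow> real) \<Rightarrow> nat \<Rightarrow> nat \<Rightarrow> real" where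
  "Ml WS Wstep i j = (if j \<le> i then WS i * Wprod Wstep (i - 1) (j - 1) else 0)"

definition MX :: "(nat \<Rightarrow> real) \<Rightarrow> (nat \<Rightarrow> real) \<Rightarrow> (nat \<Rightarrow> real) \<Rightarrow> (nat \<Rightarrow> real)
    \<Rightarrow> (nat \<Rightarrow> real) \<Rightarrow> nat \<Rightarrow> nat \<Rightarrow> real" where
  "MX th WSq WS Wstep Wendq i j =
     (if j = i then th i * WSq i
      else if j < i then th j * WS i * Wprod Wstep (i - 1) j * Wendq j else 0)"

definition MY :: "(nat \<Rightarrow> real) \<Rightarrow> (nat \<Rightarrow> real) \<Rightarrow> (nat \<Rightarrow> real)
    \<Rightarrow> (nat \<Rightarrow> real) \<Rightarrow> nat \<Rightarrow> nat \<Rightarrow> real" where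
  "MY ta WS Wstep Wend i j =
     (if j = i then ta i * WS i
      else if j < i then ta j * WS i * Wprod Wstep (i - 1) j * Wend j else 0)"

text \<open>The recursively defined h^{J_i}; h^{J_0} = 0. The l^1_omega-valued integral is
  taken coordinatewise (coordinate functionals are continuous on l^1_omega).\<close>
fun hJ :: "(nat \<Rightarrow> real \<Rightarrow> real \<Rightarrow> 'd seq \<Rightarrow> 'd seq) \<Rightarrow> (nat \<Rightarrow> real) \<Rightarrow> ('d seq \<Rightarrow> 'd seq)
    \<Rightarrow> (nat \<Rightarrow> 'd seq) \<Rightarrow> (nat \<Rightarrow> real \<Rightarrow> 'd seq) \<Rightarrow> (nat \<Rightarrow> real \<Rightarrow> 'd seq)
    \<Rightarrow> nat \<Rightarrow> real \<Rightarrow> 'd seq" where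
  "hJ U tg Q \<phi> \<psi> p 0 = (\<lambda>t k. 0)"
| "hJ U tg Q \<phi> \<psi> p (Suc i) = (\<lambda>t k.
      U (Suc i) t (tg i) (\<lambda>m. \<phi> (Suc i) m + hJ U tg Q \<phi> \<psi> p i (tg i) m) k
    + integral {tg i..t} (\<lambda>s. U (Suc i) t s (\<lambda>m. Q (\<psi> (Suc i) s) m + p (Suc i) s m) k))"

end

theory Submission
  imports Defs
begin


lemma powr_has_integral:
  fixes a t \<gamma> :: real
  assumes "0 \<le> \<gamma>" "\<gamma> < 1" "a \<le> t"
  shows "((\<lambda>s. (t - s) powr (-\<gamma>)) has_integral (t - a) powr (1 - \<gamma>) / (1 - \<gamma>)) {a..t}"
proof -
  define f where "f s = (- (1/(1-\<gamma>))) * (t - s) powr (1 - \<gamma>)" for s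
  have c: "continuous_on {a..t} f"
    unfolding f_def using assms
    by (intro continuous_intros continuous_on_powr') auto
  have d: "(f has_vector_derivative (t - x) powr (-\<gamma>)) (at x)" if "x \<in> {a<..<t}" for x
  proof -
    have "((\<lambda>s. (t - s) powr (1 - \<gamma>)) has_real_derivative (1 - \<gamma>) * (t - x) powr (1 - \<gamma> - 1) * (-1)) (at x)"
      using that by (intro DERIV_fun_powr derivative_eq_intros) auto
    then have "(f has_real_derivative (- (1/(1-\<gamma>))) * ((1 - \<gamma>) * (t - x) powr (1 - \<gamma> - 1) * (-1))) (at x)"
      unfolding f_def by (rule DERIV_cmult)
    moreover have "(- (1/(1-\<gamma>))) * ((1 - \<gamma>) * (t - x) powr (1 - \<gamma> - 1) * (-1)) = (t - x) powr (-\<gamma>)"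
      using assms by simp
    ultimately have "(f has_real_derivative (t - x) powr (-\<gamma>)) (at x)" by simp
    then show ?thesis by (simp add: has_real_derivative_iff_has_vector_derivative)
  qed
  have "((\<lambda>s. (t - s) powr (-\<gamma>)) has_integral (f t - f a)) {a..t}"
    by (rule fundamental_theorem_of_calculus_interior[OF assms(3) c d])
  moreover have "f t - f a = (t - a) powr (1 - \<gamma>) / (1 - \<gamma>)" unfolding f_def by simp
  ultimately show ?thesis by simp
qed


lemma omega_nonneg: fixes k :: "'d::finite \<Rightarrow> nat" shows "\<nu>F \<ge> 0 \<Longrightarrow> omega \<nu>F k \<ge> 0"
  unfolding omega_def alpha_def by (intro mult_nonneg_nonneg prod_nonneg) auto

lemma sum_le_wnorm:
  assumes "finite F"
  shows "(\<Sum>k\<in>F. ennreal (\<bar>a k\<bar> * omega \<nu>F k)) \<le> wnorm \<nu>F a"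
proof -
  have "(\<Sum>k\<in>F. ennreal (\<bar>a k\<bar> * omega \<nu>F k)) = infsum (\<lambda>k. ennreal (\<bar>a k\<bar> * omega \<nu>F k)) F"
    using assms by simp
  also have "\<dots> \<le> wnorm \<nu>F a" unfolding wnorm_def
    by (rule infsum_mono_neutral) (auto intro: nonneg_summable_on_complete)
  finally show ?thesis .
qed

lemma wnorm_integral_le:
  fixes F :: "real \<Rightarrow> 'd::finite seq"
  assumes nu: "\<nu>F \<ge> 1" and at: "a \<le> t" and G: "G integrable_on {a..t}"
    and G0: "\<forall>s\<in>{a..t}. G s \<ge> 0"
    and bd: "\<forall>s\<in>{a<..<t}. wnorm \<nu>F (F s) \<le> ennreal (G s)"
  shows "wnorm \<nu>F (\<lambda>k. integral {a..t} (\<lambda>s. F s k)) \<le> ennreal (integral {a..t} G)"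
proof -
  define I where "I k = integral {a..t} (\<lambda>s. F s k)" for k
  have om: "omega \<nu>F k \<ge> 0" for k :: "'d \<Rightarrow> nat" by (rule omega_nonneg) (use nu in auto)
  show ?thesis
    unfolding wnorm_def I_def[symmetric]
  proof (rule infsum_le_finite_sums)
    show "(\<lambda>k. ennreal (\<bar>I k\<bar> * omega \<nu>F k)) summable_on UNIV"
      by (auto intro: nonneg_summable_on_complete)
  next
    fix FF :: "('d \<Rightarrow> nat) set" assume fin: "finite FF"
    define H where "H s = (\<Sum>k\<in>FF. sgn (I k) * omega \<nu>F k * F s k)" for s
    have hk: "((\<lambda>s. sgn (I k) * omega \<nu>F k * F s k) has_integral (\<bar>I k\<bar> * omega \<nu>F k)) {a..t}" for k
    proof (cases "I k = 0")
      case True then show ?thesis by simp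
    next
      case False
      then have "(\<lambda>s. F s k) integrable_on {a..t}" unfolding I_def
        using not_integrable_integral by blast
      then have "((\<lambda>s. F s k) has_integral I k) {a..t}" unfolding I_def
        by (simp add: integrable_integral)
      then have "((\<lambda>s. (sgn (I k) * omega \<nu>F k) * F s k) has_integral (sgn (I k) * omega \<nu>F k) * I k) {a..t}"
        by (rule has_integral_mult_right)
      moreover have "(sgn (I k) * omega \<nu>F k) * I k = \<bar>I k\<bar> * omega \<nu>F k"
        by (simp add: abs_sgn mult.commute mult.left_commute)
      ultimately show ?thesis by simp
    qed
    have Hint: "(H has_integral (\<Sum>k\<in>FF. \<bar>I k\<bar> * omega \<nu>F k)) {a..t}"
      unfolding H_def by (rule has_integral_sum[OF fin]) (use hk in auto)
    define H' where "H' s = (if s \<in> {a<..<t} then H s else 0)" for s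
    have H'int: "(H' has_integral (\<Sum>k\<in>FF. \<bar>I k\<bar> * omega \<nu>F k)) {a..t}"
      by (rule has_integral_spike_finite[of "{a,t}", OF _ _ Hint]) (auto simp: H'_def)
    have le: "H' s \<le> G s" if s: "s \<in> {a..t}" for s
    proof (cases "s \<in> {a<..<t}")
      case False then show ?thesis using G0 s by (auto simp: H'_def)
    next
      case True
      have "H s \<le> (\<Sum>k\<in>FF. \<bar>F s k\<bar> * omega \<nu>F k)"
        unfolding H_def
      proof (rule sum_mono)
        fix k
        have "sgn (I k) * F s k \<le> \<bar>F s k\<bar>"
          by (cases "I k > 0"; cases "I k < 0") (auto simp: sgn_if)
        then show "sgn (I k) * omega \<nu>F k * F s k \<le> \<bar>F s k\<bar> * omega \<nu>F k"
          using om[of k] by (metis mult.commute mult.left_commute mult_right_mono)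
      qed
      moreover have "ennreal (\<Sum>k\<in>FF. \<bar>F s k\<bar> * omega \<nu>F k) \<le> ennreal (G s)"
      proof -
        have "ennreal (\<Sum>k\<in>FF. \<bar>F s k\<bar> * omega \<nu>F k) = (\<Sum>k\<in>FF. ennreal (\<bar>F s k\<bar> * omega \<nu>F k))"
          using om by (simp add: sum_ennreal)
        also have "\<dots> \<le> wnorm \<nu>F (F s)" by (rule sum_le_wnorm[OF fin])
        also have "\<dots> \<le> ennreal (G s)" using bd True by auto
        finally show ?thesis .
      qed
      then have "(\<Sum>k\<in>FF. \<bar>F s k\<bar> * omega \<nu>F k) \<le> G s"
        using G0 s by (simp add: ennreal_le_iff)
      ultimately show ?thesis using True by (simp add: H'_def)
    qed
    have "(\<Sum>k\<in>FF. \<bar>I k\<bar> * omega \<nu>F k) \<le> integral {a..t} G"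
      using integral_le[OF has_integral_integrable[OF H'int] G le] H'int
      by (simp add: integral_unique)
    then show "(\<Sum>k\<in>FF. ennreal (\<bar>I k\<bar> * omega \<nu>F k)) \<le> ennreal (integral {a..t} G)"
      using om by (simp add: sum_ennreal ennreal_leI)
  qed
qed

lemma wnorm_add:
  fixes a b :: "'d::finite seq"
  assumes nu: "\<nu>F \<ge> 1"
  shows "wnorm \<nu>F (\<lambda>k. a k + b k) \<le> wnorm \<nu>F a + wnorm \<nu>F b"
proof -
  have om: "omega \<nu>F k \<ge> 0" for k :: "'d \<Rightarrow> nat" by (rule omega_nonneg) (use nu in auto)
  have "wnorm \<nu>F (\<lambda>k. a k + b k) \<le> (\<Sum>\<^sub>\<infinity>k. ennreal (\<bar>a k\<bar> * omega \<nu>F k) + ennreal (\<bar>b k\<bar> * omega \<nu>F k))"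
    unfolding wnorm_def
  proof (rule infsum_mono)
    fix k :: "'d \<Rightarrow> nat"
    have "\<bar>a k + b k\<bar> * omega \<nu>F k \<le> \<bar>a k\<bar> * omega \<nu>F k + \<bar>b k\<bar> * omega \<nu>F k"
      using om[of k] by (metis abs_triangle_ineq distrib_right mult_right_mono)
    then show "ennreal (\<bar>a k + b k\<bar> * omega \<nu>F k) \<le> ennreal (\<bar>a k\<bar> * omega \<nu>F k) + ennreal (\<bar>b k\<bar> * omega \<nu>F k)"
      using om[of k] by (simp add: ennreal_plus[symmetric] ennreal_leI del: ennreal_plus)
  qed (auto intro: nonneg_summable_on_complete)
  also have "\<dots> = wnorm \<nu>F a + wnorm \<nu>F b" unfolding wnorm_def
    by (rule infsum_add) (auto intro: nonneg_summable_on_complete)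
  finally show ?thesis .
qed

lemma ennreal_div_bound:
  assumes "c > 0" "d \<ge> 0" "ennreal c * x \<le> ennreal d"
  shows "x \<le> ennreal (d / c)"
proof (cases x)
  case (real r)
  then have "ennreal (c * r) \<le> ennreal d" using assms by (simp add: ennreal_mult)
  then have "c * r \<le> d" using assms by (simp add: ennreal_le_iff)
  then have "r \<le> d / c" using assms by (simp add: field_simps)
  then show ?thesis using real by (simp add: ennreal_leI)
next
  case top
  then show ?thesis using assms by (simp add: ennreal_mult_top top_unique)
qed

lemma integral_step_bound:
  fixes F :: "real \<Rightarrow> 'd::finite seq"
  assumes nu: "\<nu>F \<ge> 1" and gam: "0 \<le> \<gamma>" "\<gamma> < 1" and at: "a \<le> t"
    and c: "WQ \<ge> 0" "Br \<ge> 0" "WP \<ge> 0" "Cr \<ge> 0"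
    and bd: "\<forall>s\<in>{a<..<t}. wnorm \<nu>F (F s) \<le> ennreal (WQ * Br * (t - s) powr (-\<gamma>) + WP * Cr)"
  shows "wnorm \<nu>F (\<lambda>k. integral {a..t} (\<lambda>s. F s k))
     \<le> ennreal (WQ * Br * ((t - a) powr (1 - \<gamma>) / (1 - \<gamma>)) + WP * Cr * (t - a))"
proof -
  have hi: "((\<lambda>s. WQ * Br * (t - s) powr (-\<gamma>) + WP * Cr) has_integral
      WQ * Br * ((t - a) powr (1 - \<gamma>) / (1 - \<gamma>)) + WP * Cr * (t - a)) {a..t}"
  proof (rule has_integral_add)
    show "((\<lambda>s. WQ * Br * (t - s) powr (-\<gamma>)) has_integral WQ * Br * ((t - a) powr (1 - \<gamma>) / (1 - \<gamma>))) {a..t}"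
      by (rule has_integral_mult_right[OF powr_has_integral[OF gam at]])
    show "((\<lambda>s. WP * Cr) has_integral WP * Cr * (t - a)) {a..t}"
      using has_integral_const_real[of "WP * Cr" a t] at by (simp add: mult.commute)
  qed
  show ?thesis
    using wnorm_integral_le[OF nu at has_integral_integrable[OF hi] _ bd] c integral_unique[OF hi]
    by auto
qed

lemma point_bound:
  fixes X1 X2 ps \<psi>s :: "'d::finite seq"
  assumes nu: "\<nu>F \<ge> 1" and ts: "t - s > 0"
    and b1: "ennreal ((t - s) powr \<gamma>) * wnorm \<nu>F X1 \<le> ennreal WQ * wnorm \<nu>F \<psi>s"
    and b2: "wnorm \<nu>F \<psi>s \<le> ennreal Br"
    and b3: "wnorm \<nu>F X2 \<le> ennreal WP * wnorm \<nu>F ps"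
    and b4: "wnorm \<nu>F ps \<le> ennreal Cr"
    and c: "WQ \<ge> 0" "Br \<ge> 0" "WP \<ge> 0" "Cr \<ge> 0"
  shows "wnorm \<nu>F (\<lambda>k. X1 k + X2 k) \<le> ennreal (WQ * Br * (t - s) powr (-\<gamma>) + WP * Cr)"
proof -
  have "ennreal ((t - s) powr \<gamma>) * wnorm \<nu>F X1 \<le> ennreal WQ * ennreal Br"
    using b1 b2 by (meson dual_order.trans mult_left_mono zero_le)
  then have m1: "ennreal ((t - s) powr \<gamma>) * wnorm \<nu>F X1 \<le> ennreal (WQ * Br)"
    using c by (simp add: ennreal_mult)
  have 1: "wnorm \<nu>F X1 \<le> ennreal (WQ * Br / (t - s) powr \<gamma>)"
    by (rule ennreal_div_bound[OF _ _ m1]) (use ts c in auto)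
  have "WQ * Br / (t - s) powr \<gamma> = WQ * Br * (t - s) powr (-\<gamma>)"
    using ts by (simp add: powr_minus divide_inverse)
  with 1 have 1: "wnorm \<nu>F X1 \<le> ennreal (WQ * Br * (t - s) powr (-\<gamma>))" by simp
  have "wnorm \<nu>F X2 \<le> ennreal WP * ennreal Cr"
    using b3 b4 by (meson dual_order.trans mult_left_mono zero_le)
  then have 2: "wnorm \<nu>F X2 \<le> ennreal (WP * Cr)" using c by (simp add: ennreal_mult)
  have "wnorm \<nu>F (\<lambda>k. X1 k + X2 k) \<le> wnorm \<nu>F X1 + wnorm \<nu>F X2" by (rule wnorm_add[OF nu])
  also have "\<dots> \<le> ennreal (WQ * Br * (t - s) powr (-\<gamma>)) + ennreal (WP * Cr)"
    using 1 2 by (rule add_mono)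
  also have "\<dots> = ennreal (WQ * Br * (t - s) powr (-\<gamma>) + WP * Cr)"
    using c by (simp add: ennreal_plus)
  finally show ?thesis .
qed

lemma Wprod_Suc: "k \<le> j \<Longrightarrow> Wprod w (Suc j) k = w (Suc j) * Wprod w j k"
proof -
  assume "k \<le> j"
  then have "{k<..Suc j} = insert (Suc j) {k<..j}" by auto
  then show ?thesis unfolding Wprod_def by simp
qed

lemma Wprod_self[simp]: "Wprod w j j = 1"
  unfolding Wprod_def by simp

lemma Wprod_nonneg: "\<forall>m\<in>{1..K}. w m > 0 \<Longrightarrow> j \<le> K \<Longrightarrow> Wprod w j k \<ge> 0"
  unfolding Wprod_def by (intro prod_nonneg) (auto simp: less_imp_le)

lemma infnorm_ge: "i \<in> {1..K} \<Longrightarrow> (\<Sum>j\<in>{1..i}. M i j) \<le> infnorm K M"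
proof -
  assume i: "i \<in> {1..K}"
  have "(\<Sum>j\<in>{1..i}. M i j) \<le> (\<Sum>j\<in>{1..i}. \<bar>M i j\<bar>)" by (rule sum_mono) auto
  also have "\<dots> \<le> (\<Sum>j\<in>{1..K}. \<bar>M i j\<bar>)" using i by (intro sum_mono2) auto
  also have "\<dots> \<le> infnorm K M" unfolding infnorm_def using i by (intro Max_ge) auto
  finally show ?thesis .
qed

lemma infnorm_ge1: "i \<in> {1..K} \<Longrightarrow> j \<in> {1..K} \<Longrightarrow> \<bar>M i j\<bar> \<le> infnorm K M"
proof -
  assume i: "i \<in> {1..K}" and j: "j \<in> {1..K}"
  have "\<bar>M i j\<bar> \<le> (\<Sum>j\<in>{1..K}. \<bar>M i j\<bar>)" using j by (intro member_le_sum) auto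
  also have "\<dots> \<le> infnorm K M" unfolding infnorm_def using i by (intro Max_ge) auto
  finally show ?thesis .
qed


theorem mainTheorem9:
  fixes L :: "'d::finite \<Rightarrow> real" and \<nu>F \<gamma> :: real and q K :: nat
    and tg :: "nat \<Rightarrow> real"
    and U :: "nat \<Rightarrow> real \<Rightarrow> real \<Rightarrow> 'd seq \<Rightarrow> 'd seq"
    and WS WSq Wend Wendq Wstep :: "nat \<Rightarrow> real"
    and \<phi> :: "nat \<Rightarrow> 'd seq" and \<psi> p :: "nat \<Rightarrow> real \<Rightarrow> 'd seq"
  assumes L_pos: "\<forall>m. L m > 0"
    and nu: "\<nu>F \<ge> 1"
    and q: "q \<in> {0, 2}"
    and K: "K \<ge> 1"
    and t0: "tg 0 = 0"
    and tinc: "\<forall>i<K. tg i < tg (Suc i)"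
    and gam: "0 \<le> \<gamma>" "\<gamma> < 1"
    and lin: "\<forall>i\<in>{1..K}. \<forall>t s. tg (i - 1) \<le> s \<and> s \<le> t \<and> t \<le> tg i \<longrightarrow>
               (\<forall>a b. U i t s (\<lambda>k. a k + b k) = (\<lambda>k. U i t s a k + U i t s b k)) \<and>
               (\<forall>c a. U i t s (\<lambda>k. c * a k) = (\<lambda>k. c * U i t s a k))"
    and U_id: "\<forall>i\<in>{1..K}. \<forall>s. tg (i - 1) \<le> s \<and> s \<le> tg i \<longrightarrow> (\<forall>a. U i s s a = a)"
    and U_cocycle: "\<forall>i\<in>{1..K}. \<forall>t r s. tg (i - 1) \<le> s \<and> s \<le> r \<and> r \<le> t \<and> t \<le> tg i \<longrightarrow>
               (\<forall>a. U i t r (U i r s a) = U i t s a)"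
    and W_pos: "\<forall>i\<in>{1..K}. WS i > 0 \<and> WSq i > 0 \<and> Wend i > 0 \<and> Wendq i > 0 \<and> Wstep i > 0"
    and B_S: "\<forall>i\<in>{1..K}. \<forall>t s. tg (i - 1) \<le> s \<and> s < t \<and> t \<le> tg i \<longrightarrow>
               (\<forall>a. in_l1w \<nu>F a \<longrightarrow> wnorm \<nu>F (U i t s a) \<le> ennreal (WS i) * wnorm \<nu>F a)"
    and B_Sq: "\<forall>i\<in>{1..K}. \<forall>t s. tg (i - 1) \<le> s \<and> s < t \<and> t \<le> tg i \<longrightarrow>
               (\<forall>a. in_l1w \<nu>F a \<longrightarrow>
                  ennreal ((t - s) powr \<gamma>) * wnorm \<nu>F (U i t s (Qop q L a))
                    \<le> ennreal (WSq i) * wnorm \<nu>F a)"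
    and B_end: "\<forall>i\<in>{1..K}. \<forall>s. tg (i - 1) \<le> s \<and> s < tg i \<longrightarrow>
               (\<forall>a. in_l1w \<nu>F a \<longrightarrow> wnorm \<nu>F (U i (tg i) s a) \<le> ennreal (Wend i) * wnorm \<nu>F a)"
    and B_endq: "\<forall>i\<in>{1..K}. \<forall>s. tg (i - 1) \<le> s \<and> s < tg i \<longrightarrow>
               (\<forall>a. in_l1w \<nu>F a \<longrightarrow>
                  ennreal ((tg i - s) powr \<gamma>) * wnorm \<nu>F (U i (tg i) s (Qop q L a))
                    \<le> ennreal (Wendq i) * wnorm \<nu>F a)"
    and B_step: "\<forall>i\<in>{1..K}. \<forall>a. in_l1w \<nu>F a \<longrightarrow>
               wnorm \<nu>F (U i (tg i) (tg (i - 1)) a) \<le> ennreal (Wstep i) * wnorm \<nu>F a"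
    and data: "\<forall>i\<in>{1..K}. in_l1w \<nu>F (\<phi> i) \<and> in_C \<nu>F (Jint tg i) (\<psi> i)
                 \<and> in_C \<nu>F (Jint tg i) (p i)"
  shows "Max ((\<lambda>i. Xnorm \<nu>F (Jint tg i) (hJ U tg (Qop q L) \<phi> \<psi> p i)) ` {1..K})
     \<le> ennreal (infnorm K (Ml WS Wstep)) * Max ((\<lambda>i. wnorm \<nu>F (\<phi> i)) ` {1..K})
       + ennreal (infnorm K (MX (tauhat tg \<gamma>) WSq WS Wstep Wendq))
           * Max ((\<lambda>i. Xnorm \<nu>F (Jint tg i) (\<psi> i)) ` {1..K})
       + ennreal (infnorm K (MY (tau tg) WS Wstep Wend))
           * Max ((\<lambda>i. Xnorm \<nu>F (Jint tg i) (p i)) ` {1..K})"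
proof -
  define h where "h = hJ U tg (Qop q L) \<phi> \<psi> p"
  have hSuc: "h (Suc j) t = (\<lambda>k. U (Suc j) t (tg j) (\<lambda>m. \<phi> (Suc j) m + h j (tg j) m) k
      + integral {tg j..t} (\<lambda>s. U (Suc j) t s (\<lambda>m. Qop q L (\<psi> (Suc j) s) m + p (Suc j) s m) k))" for j t
    by (simp add: h_def)
  have h0: "h 0 t = (\<lambda>k. 0)" for t by (simp add: h_def)
  have tgs: "tg j < tg (Suc j)" if "j < K" for j using tinc that by auto
  have taupos: "tau tg (Suc j) > 0" if "j < K" for j using tgs[OF that] by (simp add: tau_def)
  have thpos: "tauhat tg \<gamma> (Suc j) > 0" if "j < K" for j
    using taupos[OF that] gam by (simp add: tauhat_def)
  have Wp: "WS i > 0" "WSq i > 0" "Wend i > 0" "Wendq i > 0" "Wstep i > 0" if "i \<in> {1..K}" for i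
    using W_pos that by auto
  have Wpj: "WS (Suc j) > 0" "WSq (Suc j) > 0" "Wend (Suc j) > 0" "Wendq (Suc j) > 0" "Wstep (Suc j) > 0"
    if "j < K" for j using Wp[of "Suc j"] that by auto
  have Kne: "{1..K} \<noteq> {}" using K by auto
  define A where "A = Max ((\<lambda>i. wnorm \<nu>F (\<phi> i)) ` {1..K})"
  define B where "B = Max ((\<lambda>i. Xnorm \<nu>F (Jint tg i) (\<psi> i)) ` {1..K})"
  define C where "C = Max ((\<lambda>i. Xnorm \<nu>F (Jint tg i) (p i)) ` {1..K})"
  define Ml' where "Ml' = infnorm K (Ml WS Wstep)"
  define MX' where "MX' = infnorm K (MX (tauhat tg \<gamma>) WSq WS Wstep Wendq)"
  define MY' where "MY' = infnorm K (MY (tau tg) WS Wstep Wend)"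
  have MXpos: "MX' > 0"
  proof -
    have "\<bar>MX (tauhat tg \<gamma>) WSq WS Wstep Wendq 1 1\<bar> \<le> MX'"
      unfolding MX'_def by (rule infnorm_ge1) (use K in auto)
    moreover have "MX (tauhat tg \<gamma>) WSq WS Wstep Wendq 1 1 > 0"
      using thpos[of 0] Wpj(2)[of 0] K by (simp add: MX_def)
    ultimately show ?thesis by simp
  qed
  have MYpos: "MY' > 0"
  proof -
    have "\<bar>MY (tau tg) WS Wstep Wend 1 1\<bar> \<le> MY'"
      unfolding MY'_def by (rule infnorm_ge1) (use K in auto)
    moreover have "MY (tau tg) WS Wstep Wend 1 1 > 0"
      using taupos[of 0] Wpj(1)[of 0] K by (simp add: MY_def)
    ultimately show ?thesis by simp
  qed
  have Mlnn: "Ml' \<ge> 0"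
  proof -
    have "\<bar>Ml WS Wstep 1 1\<bar> \<le> Ml'"
      unfolding Ml'_def by (rule infnorm_ge1) (use K in auto)
    then show ?thesis by linarith
  qed
  show ?thesis
  proof (cases "B = top \<or> C = top")
    case True
    have T: "ennreal Ml' * A + ennreal MX' * B + ennreal MY' * C = top"
      using True MXpos MYpos by (auto simp: ennreal_mult_top)
    then show ?thesis
      unfolding A_def[symmetric] B_def[symmetric] C_def[symmetric] Ml'_def[symmetric]
        MX'_def[symmetric] MY'_def[symmetric] T by simp
  next
    case False
    then obtain Br Cr where Br: "Br \<ge> 0" "B = ennreal Br" and Cr: "Cr \<ge> 0" "C = ennreal Cr"
      by (metis ennreal_cases)
    have "A \<in> (\<lambda>i. wnorm \<nu>F (\<phi> i)) ` {1..K}" unfolding A_def by (rule Max_in) (use Kne in auto)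
    then have "A \<noteq> top" using data by (auto simp: in_l1w_def)
    then obtain Ar where Ar: "Ar \<ge> 0" "A = ennreal Ar" by (metis ennreal_cases)
    have \<phi>b: "wnorm \<nu>F (\<phi> i) \<le> ennreal Ar" if "i \<in> {1..K}" for i
      using that unfolding Ar(2)[symmetric] A_def by (intro Max_ge) auto
    have \<psi>b: "wnorm \<nu>F (\<psi> i s) \<le> ennreal Br" if "i \<in> {1..K}" "s \<in> Jint tg i" for i s
    proof -
      have "wnorm \<nu>F (\<psi> i s) \<le> Xnorm \<nu>F (Jint tg i) (\<psi> i)"
        unfolding Xnorm_def using that by (intro SUP_upper) auto
      also have "\<dots> \<le> B" unfolding B_def using that by (intro Max_ge) auto
      finally show ?thesis using Br by simp
    qed
    have pb: "wnorm \<nu>F (p i s) \<le> ennreal Cr" if "i \<in> {1..K}" "s \<in> Jint tg i" for i s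
    proof -
      have "wnorm \<nu>F (p i s) \<le> Xnorm \<nu>F (Jint tg i) (p i)"
        unfolding Xnorm_def using that by (intro SUP_upper) auto
      also have "\<dots> \<le> C" unfolding C_def using that by (intro Max_ge) auto
      finally show ?thesis using Cr by simp
    qed
    have Igen: "wnorm \<nu>F (\<lambda>k. integral {tg j..t} (\<lambda>s. U (Suc j) t s (\<lambda>m. Qop q L (\<psi> (Suc j) s) m + p (Suc j) s m) k))
        \<le> ennreal (WQ * Br * ((t - tg j) powr (1 - \<gamma>) / (1 - \<gamma>)) + WP * Cr * (t - tg j))"
      if j: "j < K" and t1: "tg j < t" and t2: "t \<le> tg (Suc j)" and WQ: "WQ \<ge> 0" and WP: "WP \<ge> 0"
        and bQ: "\<forall>s\<in>{tg j<..<t}. \<forall>a. in_l1w \<nu>F a \<longrightarrow>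
           ennreal ((t - s) powr \<gamma>) * wnorm \<nu>F (U (Suc j) t s (Qop q L a)) \<le> ennreal WQ * wnorm \<nu>F a"
        and bP: "\<forall>s\<in>{tg j<..<t}. \<forall>a. in_l1w \<nu>F a \<longrightarrow>
           wnorm \<nu>F (U (Suc j) t s a) \<le> ennreal WP * wnorm \<nu>F a"
      for j t WQ WP
    proof (rule integral_step_bound[OF nu gam])
      show "tg j \<le> t" using t1 by simp
      show "\<forall>s\<in>{tg j<..<t}. wnorm \<nu>F (U (Suc j) t s (\<lambda>m. Qop q L (\<psi> (Suc j) s) m + p (Suc j) s m))
          \<le> ennreal (WQ * Br * (t - s) powr - \<gamma> + WP * Cr)"
      proof
        fix s assume s: "s \<in> {tg j<..<t}"
        have i1: "Suc j \<in> {1..K}" using j by auto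
        have sJ: "s \<in> Jint tg (Suc j)" using s t2 by (auto simp: Jint_def)
        have lin1: "U (Suc j) t s (\<lambda>m. Qop q L (\<psi> (Suc j) s) m + p (Suc j) s m)
            = (\<lambda>k. U (Suc j) t s (Qop q L (\<psi> (Suc j) s)) k + U (Suc j) t s (p (Suc j) s) k)"
          using lin i1 s t2 by auto
        have l1: "in_l1w \<nu>F (\<psi> (Suc j) s)" "in_l1w \<nu>F (p (Suc j) s)"
          using data i1 sJ by (auto simp: in_C_def)
        show "wnorm \<nu>F (U (Suc j) t s (\<lambda>m. Qop q L (\<psi> (Suc j) s) m + p (Suc j) s m))
          \<le> ennreal (WQ * Br * (t - s) powr - \<gamma> + WP * Cr)"
          unfolding lin1
        proof (rule point_bound[OF nu])
          show "t - s > 0" using s by simp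
          show "ennreal ((t - s) powr \<gamma>) * wnorm \<nu>F (U (Suc j) t s (Qop q L (\<psi> (Suc j) s)))
              \<le> ennreal WQ * wnorm \<nu>F (\<psi> (Suc j) s)" using bQ s l1 by auto
          show "wnorm \<nu>F (\<psi> (Suc j) s) \<le> ennreal Br" by (rule \<psi>b[OF i1 sJ])
          show "wnorm \<nu>F (U (Suc j) t s (p (Suc j) s)) \<le> ennreal WP * wnorm \<nu>F (p (Suc j) s)"
            using bP s l1 by auto
          show "wnorm \<nu>F (p (Suc j) s) \<le> ennreal Cr" by (rule pb[OF i1 sJ])
        qed (use WQ WP Br Cr in auto)
      qed
    qed (use WQ WP Br Cr in auto)
    define S\<phi> where "S\<phi> j = (\<Sum>m\<in>{1..j}. Wprod Wstep j (m - 1))" for j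
    define S\<psi> where "S\<psi> j = (\<Sum>m\<in>{1..j}. Wprod Wstep j m * (tauhat tg \<gamma> m * Wendq m))" for j
    define Sp where "Sp j = (\<Sum>m\<in>{1..j}. Wprod Wstep j m * (tau tg m * Wend m))" for j
    define E where "E j = Ar * S\<phi> j + Br * S\<psi> j + Cr * Sp j" for j
    have S\<phi>Suc: "S\<phi> (Suc j) = Wstep (Suc j) * (1 + S\<phi> j)" for j
    proof -
      have "S\<phi> (Suc j) = (\<Sum>m\<in>{1..j}. Wprod Wstep (Suc j) (m - 1)) + Wprod Wstep (Suc j) j"
        unfolding S\<phi>_def by (simp add: sum.cl_ivl_Suc)
      also have "(\<Sum>m\<in>{1..j}. Wprod Wstep (Suc j) (m - 1)) = (\<Sum>m\<in>{1..j}. Wstep (Suc j) * Wprod Wstep j (m - 1))"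
        by (intro sum.cong refl Wprod_Suc) auto
      also have "Wprod Wstep (Suc j) j = Wstep (Suc j)" using Wprod_Suc[of j j Wstep] by simp
      finally show ?thesis unfolding S\<phi>_def by (simp add: sum_distrib_left algebra_simps)
    qed
    have S\<psi>Suc: "S\<psi> (Suc j) = Wstep (Suc j) * S\<psi> j + tauhat tg \<gamma> (Suc j) * Wendq (Suc j)" for j
    proof -
      have "S\<psi> (Suc j) = (\<Sum>m\<in>{1..j}. Wprod Wstep (Suc j) m * (tauhat tg \<gamma> m * Wendq m)) + tauhat tg \<gamma> (Suc j) * Wendq (Suc j)"
        unfolding S\<psi>_def by (simp add: sum.cl_ivl_Suc)
      also have "(\<Sum>m\<in>{1..j}. Wprod Wstep (Suc j) m * (tauhat tg \<gamma> m * Wendq m))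
          = (\<Sum>m\<in>{1..j}. Wstep (Suc j) * (Wprod Wstep j m * (tauhat tg \<gamma> m * Wendq m)))"
        by (intro sum.cong refl) (auto simp: Wprod_Suc)
      finally show ?thesis unfolding S\<psi>_def by (simp add: sum_distrib_left)
    qed
    have SpSuc: "Sp (Suc j) = Wstep (Suc j) * Sp j + tau tg (Suc j) * Wend (Suc j)" for j
    proof -
      have "Sp (Suc j) = (\<Sum>m\<in>{1..j}. Wprod Wstep (Suc j) m * (tau tg m * Wend m)) + tau tg (Suc j) * Wend (Suc j)"
        unfolding Sp_def by (simp add: sum.cl_ivl_Suc)
      also have "(\<Sum>m\<in>{1..j}. Wprod Wstep (Suc j) m * (tau tg m * Wend m))
          = (\<Sum>m\<in>{1..j}. Wstep (Suc j) * (Wprod Wstep j m * (tau tg m * Wend m)))"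
        by (intro sum.cong refl) (auto simp: Wprod_Suc)
      finally show ?thesis unfolding Sp_def by (simp add: sum_distrib_left)
    qed
    have Wstnn: "\<forall>m\<in>{1..K}. Wstep m > 0" using W_pos by auto
    have thnn: "tauhat tg \<gamma> m \<ge> 0" "tau tg m \<ge> 0" if "m \<in> {1..K}" for m
      using thpos[of "m - 1"] taupos[of "m - 1"] that by (cases m; auto)+
    have Enn: "E j \<ge> 0" if "j \<le> K" for j
    proof -
      have "S\<phi> j \<ge> 0" unfolding S\<phi>_def using that
        by (intro sum_nonneg Wprod_nonneg[OF Wstnn]) auto
      moreover have "S\<psi> j \<ge> 0" unfolding S\<psi>_def using that
        by (intro sum_nonneg mult_nonneg_nonneg Wprod_nonneg[OF Wstnn] thnn(1)
            less_imp_le[OF Wp(4)]) auto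
      moreover have "Sp j \<ge> 0" unfolding Sp_def using that
        by (intro sum_nonneg mult_nonneg_nonneg Wprod_nonneg[OF Wstnn] thnn(2)
            less_imp_le[OF Wp(3)]) auto
      ultimately show ?thesis unfolding E_def using Ar Br Cr by simp
    qed
    have ESuc: "E (Suc j) = Wstep (Suc j) * (Ar + E j) + Wendq (Suc j) * Br * tauhat tg \<gamma> (Suc j)
        + Wend (Suc j) * Cr * tau tg (Suc j)" for j
      unfolding E_def S\<phi>Suc S\<psi>Suc SpSuc by (simp add: algebra_simps)
    have endb: "j \<le> K \<longrightarrow> wnorm \<nu>F (h j (tg j)) \<le> ennreal (E j)" for j
    proof (induction j)
      case 0
      show ?case by (simp add: h0 wnorm_def)
    next
      case (Suc j)
      show ?case
      proof
        assume jK: "Suc j \<le> K"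
        then have j: "j < K" by simp
        have i1: "Suc j \<in> {1..K}" using jK by auto
        have IH: "wnorm \<nu>F (h j (tg j)) \<le> ennreal (E j)" using Suc.IH jK by simp
        have En: "E j \<ge> 0" using Enn jK by simp
        have "wnorm \<nu>F (\<lambda>m. \<phi> (Suc j) m + h j (tg j) m) \<le> ennreal Ar + ennreal (E j)"
          by (rule order_trans[OF wnorm_add[OF nu] add_mono[OF \<phi>b[OF i1] IH]])
        then have sumb: "wnorm \<nu>F (\<lambda>m. \<phi> (Suc j) m + h j (tg j) m) \<le> ennreal (Ar + E j)"
          using Ar En by (simp add: ennreal_plus)
        then have sumin: "in_l1w \<nu>F (\<lambda>m. \<phi> (Suc j) m + h j (tg j) m)"
          unfolding in_l1w_def infinity_ennreal_def by (rule le_less_trans[OF _ ennreal_less_top])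
        have X: "wnorm \<nu>F (U (Suc j) (tg (Suc j)) (tg j) (\<lambda>m. \<phi> (Suc j) m + h j (tg j) m))
            \<le> ennreal (Wstep (Suc j) * (Ar + E j))"
        proof -
          have "wnorm \<nu>F (U (Suc j) (tg (Suc j)) (tg j) (\<lambda>m. \<phi> (Suc j) m + h j (tg j) m))
             \<le> ennreal (Wstep (Suc j)) * wnorm \<nu>F (\<lambda>m. \<phi> (Suc j) m + h j (tg j) m)"
            using B_step[rule_format, OF i1 sumin] by simp
          also have "\<dots> \<le> ennreal (Wstep (Suc j)) * ennreal (Ar + E j)"
            by (rule mult_left_mono[OF sumb]) simp
          finally show ?thesis using Wpj(5)[OF j] Ar En by (simp add: ennreal_mult)
        qed
        have Y: "wnorm \<nu>F (\<lambda>k. integral {tg j..tg (Suc j)} (\<lambda>s. U (Suc j) (tg (Suc j)) s (\<lambda>m. Qop q L (\<psi> (Suc j) s) m + p (Suc j) s m) k))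
            \<le> ennreal (Wendq (Suc j) * Br * ((tg (Suc j) - tg j) powr (1 - \<gamma>) / (1 - \<gamma>)) + Wend (Suc j) * Cr * (tg (Suc j) - tg j))"
        proof (rule Igen[OF j tgs[OF j] order_refl])
          show "0 \<le> Wendq (Suc j)" "0 \<le> Wend (Suc j)" using Wpj[OF j] by auto
          show "\<forall>s\<in>{tg j<..<tg (Suc j)}. \<forall>a. in_l1w \<nu>F a \<longrightarrow>
              ennreal ((tg (Suc j) - s) powr \<gamma>) * wnorm \<nu>F (U (Suc j) (tg (Suc j)) s (Qop q L a))
                \<le> ennreal (Wendq (Suc j)) * wnorm \<nu>F a"
            using B_endq[rule_format, OF i1] by simp
          show "\<forall>s\<in>{tg j<..<tg (Suc j)}. \<forall>a. in_l1w \<nu>F a \<longrightarrow>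
              wnorm \<nu>F (U (Suc j) (tg (Suc j)) s a) \<le> ennreal (Wend (Suc j)) * wnorm \<nu>F a"
            using B_end[rule_format, OF i1] by simp
        qed
        have e2: "tg (Suc j) - tg j = tau tg (Suc j)" by (simp add: tau_def)
        have e1: "tau tg (Suc j) powr (1 - \<gamma>) / (1 - \<gamma>) = tauhat tg \<gamma> (Suc j)"
          by (simp add: tauhat_def)
        have "wnorm \<nu>F (h (Suc j) (tg (Suc j))) \<le> ennreal (Wstep (Suc j) * (Ar + E j))
            + ennreal (Wendq (Suc j) * Br * tauhat tg \<gamma> (Suc j) + Wend (Suc j) * Cr * tau tg (Suc j))"
          unfolding hSuc by (rule order_trans[OF wnorm_add[OF nu] add_mono[OF X Y[unfolded e2, unfolded e1]]])
        also have "\<dots> = ennreal (Wstep (Suc j) * (Ar + E j)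
            + (Wendq (Suc j) * Br * tauhat tg \<gamma> (Suc j) + Wend (Suc j) * Cr * tau tg (Suc j)))"
          using Wpj[OF j] Ar En Br Cr thpos[OF j] taupos[OF j]
          by (intro ennreal_plus[symmetric] add_nonneg_nonneg mult_nonneg_nonneg) auto
        also have "\<dots> = ennreal (E (Suc j))" unfolding ESuc by (simp add: add.assoc)
        finally show "wnorm \<nu>F (h (Suc j) (tg (Suc j))) \<le> ennreal (E (Suc j))" .
      qed
    qed
    define R where "R = Ar * Ml' + Br * MX' + Cr * MY'"
    have ptb: "wnorm \<nu>F (h i t) \<le> ennreal R" if i: "i \<in> {1..K}" and t: "t \<in> Jint tg i" for i t
    proof -
      obtain j where ij: "i = Suc j" using i by (cases i) auto
      have j: "j < K" using i ij by auto
      have t1: "tg j < t" and t2: "t \<le> tg (Suc j)" using t ij by (auto simp: Jint_def)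
      have IH: "wnorm \<nu>F (h j (tg j)) \<le> ennreal (E j)" using endb[of j] j by simp
      have En: "E j \<ge> 0" using Enn j by simp
      have "wnorm \<nu>F (\<lambda>m. \<phi> (Suc j) m + h j (tg j) m) \<le> ennreal Ar + ennreal (E j)"
        by (rule order_trans[OF wnorm_add[OF nu] add_mono[OF \<phi>b[OF i[unfolded ij]] IH]])
      then have sumb: "wnorm \<nu>F (\<lambda>m. \<phi> (Suc j) m + h j (tg j) m) \<le> ennreal (Ar + E j)"
        using Ar En by (simp add: ennreal_plus)
      then have sumin: "in_l1w \<nu>F (\<lambda>m. \<phi> (Suc j) m + h j (tg j) m)"
        unfolding in_l1w_def infinity_ennreal_def by (rule le_less_trans[OF _ ennreal_less_top])
      have i1: "Suc j \<in> {1..K}" using i ij by simp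
      have X: "wnorm \<nu>F (U (Suc j) t (tg j) (\<lambda>m. \<phi> (Suc j) m + h j (tg j) m))
          \<le> ennreal (WS (Suc j) * (Ar + E j))"
      proof -
        have "wnorm \<nu>F (U (Suc j) t (tg j) (\<lambda>m. \<phi> (Suc j) m + h j (tg j) m))
           \<le> ennreal (WS (Suc j)) * wnorm \<nu>F (\<lambda>m. \<phi> (Suc j) m + h j (tg j) m)"
        proof -
          have c3: "tg (Suc j - 1) \<le> tg j \<and> tg j < t \<and> t \<le> tg (Suc j)" using t1 t2 by simp
          show ?thesis by (rule B_S[rule_format, OF i1 c3 sumin])
        qed
        also have "\<dots> \<le> ennreal (WS (Suc j)) * ennreal (Ar + E j)"
          by (rule mult_left_mono[OF sumb]) simp
        finally show ?thesis using Wpj(1)[OF j] Ar En by (simp add: ennreal_mult)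
      qed
      have Y: "wnorm \<nu>F (\<lambda>k. integral {tg j..t} (\<lambda>s. U (Suc j) t s (\<lambda>m. Qop q L (\<psi> (Suc j) s) m + p (Suc j) s m) k))
          \<le> ennreal (WSq (Suc j) * Br * ((t - tg j) powr (1 - \<gamma>) / (1 - \<gamma>)) + WS (Suc j) * Cr * (t - tg j))"
      proof (rule Igen[OF j t1 t2])
        show "0 \<le> WSq (Suc j)" "0 \<le> WS (Suc j)" using Wpj[OF j] by auto
        show "\<forall>s\<in>{tg j<..<t}. \<forall>a. in_l1w \<nu>F a \<longrightarrow>
            ennreal ((t - s) powr \<gamma>) * wnorm \<nu>F (U (Suc j) t s (Qop q L a))
              \<le> ennreal (WSq (Suc j)) * wnorm \<nu>F a"
          using B_Sq[rule_format, OF i1] t2 by simp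
        show "\<forall>s\<in>{tg j<..<t}. \<forall>a. in_l1w \<nu>F a \<longrightarrow>
            wnorm \<nu>F (U (Suc j) t s a) \<le> ennreal (WS (Suc j)) * wnorm \<nu>F a"
          using B_S[rule_format, OF i1] t2 by simp
      qed
      have m1: "(t - tg j) powr (1 - \<gamma>) / (1 - \<gamma>) \<le> tauhat tg \<gamma> (Suc j)"
        unfolding tauhat_def tau_def using t1 t2 gam
        by (intro divide_right_mono powr_mono2) auto
      have m2: "t - tg j \<le> tau tg (Suc j)" using t2 by (simp add: tau_def)
      have "WSq (Suc j) * Br * ((t - tg j) powr (1 - \<gamma>) / (1 - \<gamma>)) + WS (Suc j) * Cr * (t - tg j)
          \<le> WSq (Suc j) * Br * tauhat tg \<gamma> (Suc j) + WS (Suc j) * Cr * tau tg (Suc j)"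
        using Wpj[OF j] Br Cr m1 m2
        by (intro add_mono mult_left_mono) auto
      note monoY = this
      have Y': "wnorm \<nu>F (\<lambda>k. integral {tg j..t} (\<lambda>s. U (Suc j) t s (\<lambda>m. Qop q L (\<psi> (Suc j) s) m + p (Suc j) s m) k))
          \<le> ennreal (WSq (Suc j) * Br * tauhat tg \<gamma> (Suc j) + WS (Suc j) * Cr * tau tg (Suc j))"
        by (rule order_trans[OF Y ennreal_leI[OF monoY]])
      have tot: "wnorm \<nu>F (h i t) \<le> ennreal (WS (Suc j) * (Ar + E j))
            + ennreal (WSq (Suc j) * Br * tauhat tg \<gamma> (Suc j) + WS (Suc j) * Cr * tau tg (Suc j))"
        unfolding ij hSuc by (rule order_trans[OF wnorm_add[OF nu] add_mono[OF X Y']])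
      have rl: "(\<Sum>m\<in>{1..Suc j}. Ml WS Wstep (Suc j) m) = WS (Suc j) * (1 + S\<phi> j)"
      proof -
        have "(\<Sum>m\<in>{1..Suc j}. Ml WS Wstep (Suc j) m) = (\<Sum>m\<in>{1..Suc j}. WS (Suc j) * Wprod Wstep j (m - 1))"
          by (intro sum.cong refl) (auto simp: Ml_def)
        also have "\<dots> = WS (Suc j) * (1 + S\<phi> j)"
          unfolding S\<phi>_def by (simp add: sum.cl_ivl_Suc sum_distrib_left algebra_simps)
        finally show ?thesis .
      qed
      have rx: "(\<Sum>m\<in>{1..Suc j}. MX (tauhat tg \<gamma>) WSq WS Wstep Wendq (Suc j) m)
          = WS (Suc j) * S\<psi> j + tauhat tg \<gamma> (Suc j) * WSq (Suc j)"
      proof -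
        have "(\<Sum>m\<in>{1..Suc j}. MX (tauhat tg \<gamma>) WSq WS Wstep Wendq (Suc j) m)
            = (\<Sum>m\<in>{1..j}. MX (tauhat tg \<gamma>) WSq WS Wstep Wendq (Suc j) m) + tauhat tg \<gamma> (Suc j) * WSq (Suc j)"
          by (simp add: sum.cl_ivl_Suc MX_def)
        also have "(\<Sum>m\<in>{1..j}. MX (tauhat tg \<gamma>) WSq WS Wstep Wendq (Suc j) m)
            = (\<Sum>m\<in>{1..j}. WS (Suc j) * (Wprod Wstep j m * (tauhat tg \<gamma> m * Wendq m)))"
          by (intro sum.cong refl) (auto simp: MX_def)
        finally show ?thesis unfolding S\<psi>_def by (simp add: sum_distrib_left)
      qed
      have ry: "(\<Sum>m\<in>{1..Suc j}. MY (tau tg) WS Wstep Wend (Suc j) m)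
          = WS (Suc j) * Sp j + tau tg (Suc j) * WS (Suc j)"
      proof -
        have "(\<Sum>m\<in>{1..Suc j}. MY (tau tg) WS Wstep Wend (Suc j) m)
            = (\<Sum>m\<in>{1..j}. MY (tau tg) WS Wstep Wend (Suc j) m) + tau tg (Suc j) * WS (Suc j)"
          by (simp add: sum.cl_ivl_Suc MY_def)
        also have "(\<Sum>m\<in>{1..j}. MY (tau tg) WS Wstep Wend (Suc j) m)
            = (\<Sum>m\<in>{1..j}. WS (Suc j) * (Wprod Wstep j m * (tau tg m * Wend m)))"
          by (intro sum.cong refl) (auto simp: MY_def)
        finally show ?thesis unfolding Sp_def by (simp add: sum_distrib_left)
      qed
      have l1: "WS (Suc j) * (1 + S\<phi> j) \<le> Ml'" unfolding Ml'_def rl[symmetric] by (rule infnorm_ge[OF i1])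
      have l2: "WS (Suc j) * S\<psi> j + tauhat tg \<gamma> (Suc j) * WSq (Suc j) \<le> MX'"
        unfolding MX'_def rx[symmetric] by (rule infnorm_ge[OF i1])
      have l3: "WS (Suc j) * Sp j + tau tg (Suc j) * WS (Suc j) \<le> MY'"
        unfolding MY'_def ry[symmetric] by (rule infnorm_ge[OF i1])
      have "WS (Suc j) * (Ar + E j) + (WSq (Suc j) * Br * tauhat tg \<gamma> (Suc j) + WS (Suc j) * Cr * tau tg (Suc j))
          = Ar * (WS (Suc j) * (1 + S\<phi> j)) + Br * (WS (Suc j) * S\<psi> j + tauhat tg \<gamma> (Suc j) * WSq (Suc j))
            + Cr * (WS (Suc j) * Sp j + tau tg (Suc j) * WS (Suc j))"
        unfolding E_def by (simp add: algebra_simps)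
      also have "\<dots> \<le> R" unfolding R_def using l1 l2 l3 Ar Br Cr
        by (intro add_mono mult_left_mono) auto
      finally have leR: "WS (Suc j) * (Ar + E j) + (WSq (Suc j) * Br * tauhat tg \<gamma> (Suc j) + WS (Suc j) * Cr * tau tg (Suc j)) \<le> R" .
      have eqR: "ennreal (WS (Suc j) * (Ar + E j))
            + ennreal (WSq (Suc j) * Br * tauhat tg \<gamma> (Suc j) + WS (Suc j) * Cr * tau tg (Suc j))
          = ennreal (WS (Suc j) * (Ar + E j) + (WSq (Suc j) * Br * tauhat tg \<gamma> (Suc j) + WS (Suc j) * Cr * tau tg (Suc j)))"
        using Wpj[OF j] Ar En Br Cr thpos[OF j] taupos[OF j]
        by (intro ennreal_plus[symmetric] add_nonneg_nonneg mult_nonneg_nonneg) auto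
      show ?thesis using order_trans[OF tot[unfolded eqR] ennreal_leI[OF leR]] .
    qed
    have LHS: "Max ((\<lambda>i. Xnorm \<nu>F (Jint tg i) (h i)) ` {1..K}) \<le> ennreal R"
      using Kne by (auto simp: Xnorm_def intro!: SUP_least ptb)
    have "ennreal R = ennreal Ml' * A + ennreal MX' * B + ennreal MY' * C"
      unfolding R_def Ar(2) Br(2) Cr(2) using Ar Br Cr Mlnn MXpos MYpos
      by (simp add: ennreal_mult ennreal_plus mult.commute)
    with LHS show ?thesis
      unfolding h_def A_def B_def C_def Ml'_def MX'_def MY'_def by simp
  qed
qed
end
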